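(* Let $Q$ and $W$ satisfy the standing assumptions with $W=Y$, let $l\ge1$, and let $\mathcal R=\{(\zeta,\hat y)\in\hat X^{I^l_l}\times\hat X^{l\triangledown}:\zeta\in\hat y\}$. Then (i) $\mathcal R$ is a simulation relation from $\hat Q^{I^l_l}$ to $\hat Q^{l\triangledown}$ w.r.t. $Y$ if and only if $Q$ is domino consistent (for this $l$); and (ii) $\mathcal R^{-1}$ is a simulation relation from $\hat Q^{l\triangledown}$ to $\hat Q^{I^l_l}$ w.r.t. $Y$ if and only if $Q$ is future unique w.r.t. $I^l_l$.
   Context: Strings and signals: $\diamond$ is a symbol not in any other set considered. For a set $A$ and $l\in\mathbb N_0$, $A^l$ is the set of strings of length $l$ over $A$, indexed $\zeta=\zeta(0)\cdots\zeta(l-1)$; $\lambda$ is the empty string and $\cdot$ denotes concatenation. For a map $w$ on $\mathbb Z$ (or a string) and integers $t_1\le t_2$, $w|_{[t_1,t_2]}=w(t_1)\cdots w(t_2)$ is the string of length $t_2-t_1+1$ (absolute time forgotten); if $t_2<t_1$ it is $\lambda$. For a set $\mathcal S$ of such maps or strings, $\mathcal S|_{[t_1,t_2]}=\{s|_{[t_1,t_2]}:s\in\mathcal S\}$. State machines: a state machine is $Q=(X,U,Y,\delta,X_0)$ with $X_0\subseteq X$, $\delta\subseteq X\times U\times Y\times X$. Let $H_\delta(x)=\{y:\exists u,x'.\,(x,u,y,x')\in\delta\}$, $F_\delta(x,u)=\{x':\exists y\in H_\delta(x).\,(x,u,y,x')\in\delta\}$. The full behavior $\mathcal B_f(Q)$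 is the set of $(\mu,\nu,\xi)\in(U\times Y\times X)^{\mathbb N_0}$ with $\xi(0)\in X_0$ and $(\xi(k),\mu(k),\nu(k),\xi(k+1))\in\delta$ for all $k\in\mathbb N_0$. $Q$ is live and reachable if every $x\in X_0$ is $\xi(0)$ for some $(\mu,\nu,\xi)\in\mathcal B_f(Q)$ and every $x\in X$ is $\xi(k)$ for some such trajectory and some $k$. Standing assumptions: $Q=(X,U,Y,\delta,X_0)$ is live and reachable and satisfies $(x,u,y,x')\in\delta\iff(x'\in F_\delta(x,u)\wedge y\in H_\delta(x))$ for all $x,x'\in X,u\in U,y\in Y$; the external signal space $W$ is finite and either $W=U\times Y$ or $W=Y$ (here $W=Y$, with $\pi_W(u,y)=\pi_Y(u,y)=y$). Behaviors: $\mathcal B(Q)$ is the set of $w:\mathbb Z\to Y\cup\{\diamond\}$ such that for some $(\mu,\nu,\xi)\in\mathcal B_f(Q)$, $w(k)=\diamond$ for $k<0$ and $w(k)=\nu(k)$ for $k\ge0$. $\mathcal B_S(Q)$ is the set of pairs $(w,\xi)$ of maps on $\mathbb Z$ with $w(k)=\xi(k)=\diamond$ for $k<0$ and $(w(k),\xi(k))=(\nu(k),\xi'(k))$ for $k\ge0$, for some $(\mu,\nu,\xi')\in\mathcal B_f(Q)$. For a set $\mathcal B$ of maps on $\mathbb Z$, $\Pi_l(\mathcal B)=\bigcup_{k\in\mathbb N_0}\mathcal B|_{[k-l+1,k]}$. Corresponding strings: for integers $a,b$ and $x\in X$, $E^{[a,b]}(x)=\{\zeta:\exists(w,\xi)\in\mathcal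 B_S(Q),k\in\mathbb N_0:\ \xi(k)=x,\ \zeta=w|_{[k+a,k+b]}\}$. For $l,m\in\mathbb N_0$ with $m\le l$, $I^l_m=[m-l,m-1]$; in particular $I^l_l=[0,l-1]$. Future uniqueness: $Q$ is future unique w.r.t. $I^l_m$ if for all $x\in X$ and $\zeta,\zeta'\in E^{I^l_m}(x)$, $\zeta|_{[l-m,l-1]}=\zeta'|_{[l-m,l-1]}$. Abstract state machine: $\hat Q^{I^l_m}=(\hat X^{I^l_m},U,Y,\hat\delta^{I^l_m},\hat X^{I^l_m}_0)$ with $\hat X^{I^l_m}=\bigcup_{x\in X}E^{I^l_m}(x)$, $\hat X^{I^l_m}_0=\bigcup_{x\in X_0}E^{I^l_m}(x)$, and $(\hat x,u,y,\hat x')\in\hat\delta^{I^l_m}$ iff (1) $\hat x'|_{[0,l-m-1]}=(\hat x|_{[0,l-m-1]}\cdot\pi_W(u,y))|_{[1,l-m]}$, (2) $\hat x|_{[l-m,l-1]}=(\pi_W(u,y)\cdot\hat x'|_{[l-m,l-2]})|_{[0,m-1]}$, and (3) there are $x,x'\in X$ with $\hat x\in E^{I^l_m}(x)$, $\hat x'\in E^{I^l_m}(x')$, $(x,u,y,x')\in\delta$. Quotient state machine (for $W=Y$): $\hat Q^{l\triangledown}=(\hat X^{l\triangledown},U,Y,\hat\delta^{l\triangledown},\hat X^{l\triangledown}_0)$ with $\hat X^{l\triangledown}=\{E^{I^l_l}(x):x\in X\}$ (a set of subsets of $Y^l$), $\hat X^{l\triangledown}_0=\{E^{I^l_l}(x):x\in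 X_0\}$, and $(\hat x,u,y,\hat x')\in\hat\delta^{l\triangledown}$ iff there exist $x,x'\in X$ with $\hat x=E^{I^l_l}(x)$, $\hat x'=E^{I^l_l}(x')$ and $(x,u,y,x')\in\delta$. Domino consistency (for $W=Y$): $Q$ is domino consistent if for all $\zeta\in\Pi_{l+1}(\mathcal B(Q))$ and all $\hat y\in\hat X^{l\triangledown}$ with $\zeta|_{[0,l-1]}\in\hat y$ there exists $x\in X$ with $E^{I^l_l}(x)=\hat y$ and $\zeta\in E^{[0,l]}(x)$. Simulation relations: for state machines $Q_i=(X_i,U,Y,\delta_i,X_{0,i})$, $i=1,2$, and $V\in\{U\times Y,Y\}$, a relation $\mathcal R\subseteq X_1\times X_2$ is a simulation relation from $Q_1$ to $Q_2$ w.r.t. $V$ if (a) for every $x_1\in X_{0,1}$ there is $x_2\in X_{0,2}$ with $(x_1,x_2)\in\mathcal R$, and (b) for all $(x_1,x_2)\in\mathcal R$ and $(x_1,u_1,y_1,x_1')\in\delta_1$ there exist $u_2,y_2,x_2'$ with $(x_2,u_2,y_2,x_2')\in\delta_2$, $(x_1',x_2')\in\mathcal R$ and $\pi_V(u_1,y_1)=\pi_V(u_2,y_2)$. $\mathcal R^{-1}=\{(x_2,x_1):(x_1,x_2)\in\mathcal R\}$. *)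

theory Defs
  imports Main
begin

(* Signals: maps int => 'y option, where None plays the role of the symbol diamond.
   Strings: lists, indexed from 0. *)

definition sig_restr :: "(int \<Rightarrow> 'a) \<Rightarrow> int \<Rightarrow> int \<Rightarrow> 'a list" where
  "sig_restr w t1 t2 = map (\<lambda>i. w (t1 + int i)) [0..<nat (t2 - t1 + 1)]"

(* restriction of a string zeta|_[t1,t2]; only used with 0 <= t1 *)
definition str_restr :: "'a list \<Rightarrow> int \<Rightarrow> int \<Rightarrow> 'a list" where
  "str_restr zs t1 t2 = take (nat (t2 - t1 + 1)) (drop (nat t1) zs)"

definition state_machine ::
  "'x set \<Rightarrow> 'u set \<Rightarrow> 'y set \<Rightarrow> ('x \<times> 'u \<times> 'y \<times> 'x) set \<Rightarrow> 'x set \<Rightarrow> bool" where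
  "state_machine X U Y \<delta> X0 \<longleftrightarrow> X0 \<subseteq> X \<and> \<delta> \<subseteq> X \<times> U \<times> Y \<times> X"

definition H_delta :: "('x \<times> 'u \<times> 'y \<times> 'x) set \<Rightarrow> 'x \<Rightarrow> 'y set" where
  "H_delta \<delta> x = {y. \<exists>u x'. (x, u, y, x') \<in> \<delta>}"

definition F_delta :: "('x \<times> 'u \<times> 'y \<times> 'x) set \<Rightarrow> 'x \<Rightarrow> 'u \<Rightarrow> 'x set" where
  "F_delta \<delta> x u = {x'. \<exists>y \<in> H_delta \<delta> x. (x, u, y, x') \<in> \<delta>}"

definition full_behavior ::
  "'x set \<Rightarrow> 'u set \<Rightarrow> 'y set \<Rightarrow> ('x \<times> 'u \<times> 'y \<times> 'x) set \<Rightarrow> 'x set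
   \<Rightarrow> ((nat \<Rightarrow> 'u) \<times> (nat \<Rightarrow> 'y) \<times> (nat \<Rightarrow> 'x)) set" where
  "full_behavior X U Y \<delta> X0 = {(\<mu>, \<nu>, \<xi>).
     (\<forall>k. \<mu> k \<in> U \<and> \<nu> k \<in> Y \<and> \<xi> k \<in> X) \<and> \<xi> 0 \<in> X0 \<and>
     (\<forall>k. (\<xi> k, \<mu> k, \<nu> k, \<xi> (Suc k)) \<in> \<delta>)}"

definition live_reachable ::
  "'x set \<Rightarrow> 'u set \<Rightarrow> 'y set \<Rightarrow> ('x \<times> 'u \<times> 'y \<times> 'x) set \<Rightarrow> 'x set \<Rightarrow> bool" where
  "live_reachable X U Y \<delta> X0 \<longleftrightarrow>
     (\<forall>x \<in> X0. \<exists>(\<mu>, \<nu>, \<xi>) \<in> full_behavior X U Y \<delta> X0. \<xi> 0 = x) \<and>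
     (\<forall>x \<in> X. \<exists>(\<mu>, \<nu>, \<xi>) \<in> full_behavior X U Y \<delta> X0. \<exists>k. \<xi> k = x)"

definition standing_assumptions_Y ::
  "'x set \<Rightarrow> 'u set \<Rightarrow> 'y set \<Rightarrow> ('x \<times> 'u \<times> 'y \<times> 'x) set \<Rightarrow> 'x set \<Rightarrow> bool" where
  "standing_assumptions_Y X U Y \<delta> X0 \<longleftrightarrow>
     state_machine X U Y \<delta> X0 \<and> live_reachable X U Y \<delta> X0 \<and>
     (\<forall>x \<in> X. \<forall>u \<in> U. \<forall>y \<in> Y. \<forall>x' \<in> X.
        (x, u, y, x') \<in> \<delta> \<longleftrightarrow> (x' \<in> F_delta \<delta> x u \<and> y \<in> H_delta \<delta> x)) \<and>
     finite Y"

definition behavior ::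
  "'x set \<Rightarrow> 'u set \<Rightarrow> 'y set \<Rightarrow> ('x \<times> 'u \<times> 'y \<times> 'x) set \<Rightarrow> 'x set
   \<Rightarrow> (int \<Rightarrow> 'y option) set" where
  "behavior X U Y \<delta> X0 = {w. \<exists>(\<mu>, \<nu>, \<xi>) \<in> full_behavior X U Y \<delta> X0.
      \<forall>k::int. w k = (if k < 0 then None else Some (\<nu> (nat k)))}"

definition state_behavior ::
  "'x set \<Rightarrow> 'u set \<Rightarrow> 'y set \<Rightarrow> ('x \<times> 'u \<times> 'y \<times> 'x) set \<Rightarrow> 'x set
   \<Rightarrow> ((int \<Rightarrow> 'y option) \<times> (int \<Rightarrow> 'x option)) set" where
  "state_behavior X U Y \<delta> X0 = {(w, \<xi>). \<exists>(\<mu>, \<nu>, \<xi>') \<in> full_behavior X U Y \<delta> X0.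
      \<forall>k::int. w k = (if k < 0 then None else Some (\<nu> (nat k))) \<and>
               \<xi> k = (if k < 0 then None else Some (\<xi>' (nat k)))}"

definition Pi_l :: "nat \<Rightarrow> (int \<Rightarrow> 'a) set \<Rightarrow> 'a list set" where
  "Pi_l l B = (\<Union>k::nat. (\<lambda>w. sig_restr w (int k - int l + 1) (int k)) ` B)"

definition E_str ::
  "'x set \<Rightarrow> 'u set \<Rightarrow> 'y set \<Rightarrow> ('x \<times> 'u \<times> 'y \<times> 'x) set \<Rightarrow> 'x set
   \<Rightarrow> int \<Rightarrow> int \<Rightarrow> 'x \<Rightarrow> 'y option list set" where
  "E_str X U Y \<delta> X0 a b x = {\<zeta>. \<exists>(w, \<xi>) \<in> state_behavior X U Y \<delta> X0. \<exists>k::nat.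
      \<xi> (int k) = Some x \<and> \<zeta> = sig_restr w (int k + a) (int k + b)}"

definition E_I ::
  "'x set \<Rightarrow> 'u set \<Rightarrow> 'y set \<Rightarrow> ('x \<times> 'u \<times> 'y \<times> 'x) set \<Rightarrow> 'x set
   \<Rightarrow> nat \<Rightarrow> nat \<Rightarrow> 'x \<Rightarrow> 'y option list set" where
  "E_I X U Y \<delta> X0 l m x = E_str X U Y \<delta> X0 (int m - int l) (int m - 1) x"

definition future_unique ::
  "'x set \<Rightarrow> 'u set \<Rightarrow> 'y set \<Rightarrow> ('x \<times> 'u \<times> 'y \<times> 'x) set \<Rightarrow> 'x set
   \<Rightarrow> nat \<Rightarrow> nat \<Rightarrow> bool" where
  "future_unique X U Y \<delta> X0 l m \<longleftrightarrow>
     (\<forall>x \<in> X. \<forall>\<zeta> \<in> E_I X U Y \<delta> X0 l m x. \<forall>\<zeta>' \<in> E_I X U Y \<delta> X0 l m x.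
        str_restr \<zeta> (int l - int m) (int l - 1) = str_restr \<zeta>' (int l - int m) (int l - 1))"

(* abstract state machine hat Q^{I^l_m}, W = Y, pi_W(u,y) = y *)
definition absX ::
  "'x set \<Rightarrow> 'u set \<Rightarrow> 'y set \<Rightarrow> ('x \<times> 'u \<times> 'y \<times> 'x) set \<Rightarrow> 'x set
   \<Rightarrow> nat \<Rightarrow> nat \<Rightarrow> 'y option list set" where
  "absX X U Y \<delta> X0 l m = (\<Union>x \<in> X. E_I X U Y \<delta> X0 l m x)"

definition absX0 ::
  "'x set \<Rightarrow> 'u set \<Rightarrow> 'y set \<Rightarrow> ('x \<times> 'u \<times> 'y \<times> 'x) set \<Rightarrow> 'x set
   \<Rightarrow> nat \<Rightarrow> nat \<Rightarrow> 'y option list set" where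
  "absX0 X U Y \<delta> X0 l m = (\<Union>x \<in> X0. E_I X U Y \<delta> X0 l m x)"

definition abs_delta ::
  "'x set \<Rightarrow> 'u set \<Rightarrow> 'y set \<Rightarrow> ('x \<times> 'u \<times> 'y \<times> 'x) set \<Rightarrow> 'x set
   \<Rightarrow> nat \<Rightarrow> nat \<Rightarrow> ('y option list \<times> 'u \<times> 'y \<times> 'y option list) set" where
  "abs_delta X U Y \<delta> X0 l m = {(xh, u, y, xh').
     str_restr xh' 0 (int l - int m - 1)
       = str_restr (str_restr xh 0 (int l - int m - 1) @ [Some y]) 1 (int l - int m) \<and>
     str_restr xh (int l - int m) (int l - 1)
       = str_restr ([Some y] @ str_restr xh' (int l - int m) (int l - 2)) 0 (int m - 1) \<and>
     (\<exists>x x'. xh \<in> E_I X U Y \<delta> X0 l m x \<and> xh' \<in> E_I X U Y \<delta> X0 l m x' \<and>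
             (x, u, y, x') \<in> \<delta>)}"

(* quotient state machine hat Q^{l triangledown}, W = Y *)
definition quotX ::
  "'x set \<Rightarrow> 'u set \<Rightarrow> 'y set \<Rightarrow> ('x \<times> 'u \<times> 'y \<times> 'x) set \<Rightarrow> 'x set
   \<Rightarrow> nat \<Rightarrow> 'y option list set set" where
  "quotX X U Y \<delta> X0 l = {E_I X U Y \<delta> X0 l l x | x. x \<in> X}"

definition quotX0 ::
  "'x set \<Rightarrow> 'u set \<Rightarrow> 'y set \<Rightarrow> ('x \<times> 'u \<times> 'y \<times> 'x) set \<Rightarrow> 'x set
   \<Rightarrow> nat \<Rightarrow> 'y option list set set" where
  "quotX0 X U Y \<delta> X0 l = {E_I X U Y \<delta> X0 l l x | x. x \<in> X0}"

definition quot_delta ::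
  "'x set \<Rightarrow> 'u set \<Rightarrow> 'y set \<Rightarrow> ('x \<times> 'u \<times> 'y \<times> 'x) set \<Rightarrow> 'x set
   \<Rightarrow> nat \<Rightarrow> ('y option list set \<times> 'u \<times> 'y \<times> 'y option list set) set" where
  "quot_delta X U Y \<delta> X0 l = {(yh, u, y, yh'). \<exists>x \<in> X. \<exists>x' \<in> X.
     yh = E_I X U Y \<delta> X0 l l x \<and> yh' = E_I X U Y \<delta> X0 l l x' \<and> (x, u, y, x') \<in> \<delta>}"

definition domino_consistent ::
  "'x set \<Rightarrow> 'u set \<Rightarrow> 'y set \<Rightarrow> ('x \<times> 'u \<times> 'y \<times> 'x) set \<Rightarrow> 'x set \<Rightarrow> nat \<Rightarrow> bool" where
  "domino_consistent X U Y \<delta> X0 l \<longleftrightarrow>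
     (\<forall>\<zeta> \<in> Pi_l (Suc l) (behavior X U Y \<delta> X0). \<forall>yh \<in> quotX X U Y \<delta> X0 l.
        str_restr \<zeta> 0 (int l - 1) \<in> yh \<longrightarrow>
        (\<exists>x \<in> X. E_I X U Y \<delta> X0 l l x = yh \<and> \<zeta> \<in> E_str X U Y \<delta> X0 0 (int l) x))"

definition sim_rel ::
  "('a \<times> 'b) set \<Rightarrow> 'a set \<Rightarrow> ('a \<times> 'u \<times> 'y \<times> 'a) set
   \<Rightarrow> 'b set \<Rightarrow> ('b \<times> 'u \<times> 'y \<times> 'b) set \<Rightarrow> ('u \<times> 'y \<Rightarrow> 'v) \<Rightarrow> bool" where
  "sim_rel R X01 \<delta>1 X02 \<delta>2 piV \<longleftrightarrow>
     (\<forall>x1 \<in> X01. \<exists>x2 \<in> X02. (x1, x2) \<in> R) \<and>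
     (\<forall>(x1, x2) \<in> R. \<forall>u1 y1 x1'. (x1, u1, y1, x1') \<in> \<delta>1 \<longrightarrow>
        (\<exists>u2 y2 x2'. (x2, u2, y2, x2') \<in> \<delta>2 \<and> (x1', x2') \<in> R \<and>
                     piV (u1, y1) = piV (u2, y2)))"

definition pi_Y :: "'u \<times> 'y \<Rightarrow> 'y" where
  "pi_Y p = snd p"

end

theory Submission imports Defs begin

definition outs :: "(nat \<Rightarrow> 'y) \<Rightarrow> nat \<Rightarrow> nat \<Rightarrow> 'y option list" where
  "outs \<nu> k n = map (\<lambda>i. Some (\<nu> (k + i))) [0..<n]"

lemma length_outs[simp]: "length (outs \<nu> k n) = n" by (simp add: outs_def)
lemma nth_outs[simp]: "i < n \<Longrightarrow> outs \<nu> k n ! i = Some (\<nu> (k + i))" by (simp add: outs_def)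

lemma outs_Suc: "outs \<nu> k (Suc n) = Some (\<nu> k) # outs \<nu> (Suc k) n"
  by (rule nth_equalityI) (auto simp: nth_Cons split: nat.splits)

lemma take_outs: "take m (outs \<nu> k n) = outs \<nu> k (min m n)"
  by (rule nth_equalityI) auto

lemma sig_outs:
  assumes "\<forall>k::int. w k = (if k < 0 then None else Some (\<nu> (nat k)))"
  shows "sig_restr w (int k) (int k + b) = outs \<nu> k (nat (b + 1))"
  unfolding sig_restr_def outs_def using assms
  by (auto simp: nat_add_distrib)

lemma E_str0:
  "\<zeta> \<in> E_str X U Y \<delta> X0 0 b x \<longleftrightarrow>
   (\<exists>\<mu> \<nu> \<xi> k. (\<mu>,\<nu>,\<xi>) \<in> full_behavior X U Y \<delta> X0 \<and> \<xi> k = x \<and> \<zeta> = outs \<nu> k (nat (b+1)))"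
proof
  assume "\<zeta> \<in> E_str X U Y \<delta> X0 0 b x"
  then obtain w \<xi> k \<mu> \<nu> \<xi>' where fb: "(\<mu>,\<nu>,\<xi>') \<in> full_behavior X U Y \<delta> X0"
    and h: "\<forall>k::int. w k = (if k < 0 then None else Some (\<nu> (nat k))) \<and>
               \<xi> k = (if k < 0 then None else Some (\<xi>' (nat k)))"
    and x: "\<xi> (int k) = Some x" and z: "\<zeta> = sig_restr w (int k + 0) (int k + b)"
    unfolding E_str_def state_behavior_def by blast
  have "\<xi>' k = x" using x h by auto
  moreover have "\<zeta> = outs \<nu> k (nat (b+1))" using z sig_outs[of w \<nu> k b] h by simp
  ultimately show "\<exists>\<mu> \<nu> \<xi> k. (\<mu>,\<nu>,\<xi>) \<in> full_behavior X U Y \<delta> X0 \<and> \<xi> k = x \<and> \<zeta> = outs \<nu> k (nat (b+1))"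
    using fb by blast
next
  assume "\<exists>\<mu> \<nu> \<xi> k. (\<mu>,\<nu>,\<xi>) \<in> full_behavior X U Y \<delta> X0 \<and> \<xi> k = x \<and> \<zeta> = outs \<nu> k (nat (b+1))"
  then obtain \<mu> \<nu> \<xi> k where fb: "(\<mu>,\<nu>,\<xi>) \<in> full_behavior X U Y \<delta> X0" and x: "\<xi> k = x"
    and z: "\<zeta> = outs \<nu> k (nat (b+1))" by blast
  define w where "w = (\<lambda>k::int. if k < 0 then None else Some (\<nu> (nat k)))"
  define xi where "xi = (\<lambda>k::int. if k < 0 then None else Some (\<xi> (nat k)))"
  have "(w, xi) \<in> state_behavior X U Y \<delta> X0"
    unfolding state_behavior_def w_def xi_def using fb by blast
  moreover have "xi (int k) = Some x" using x by (simp add: xi_def)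
  moreover have "\<zeta> = sig_restr w (int k + 0) (int k + b)" using z sig_outs[of w \<nu> k b] by (simp add: w_def)
  ultimately show "\<zeta> \<in> E_str X U Y \<delta> X0 0 b x" unfolding E_str_def by blast
qed

lemma E_I_char:
  "\<zeta> \<in> E_I X U Y \<delta> X0 l l x \<longleftrightarrow>
   (\<exists>\<mu> \<nu> \<xi> k. (\<mu>,\<nu>,\<xi>) \<in> full_behavior X U Y \<delta> X0 \<and> \<xi> k = x \<and> \<zeta> = outs \<nu> k l)"
  unfolding E_I_def using E_str0[of \<zeta> X U Y \<delta> X0 "int l - 1" x] by simp

lemma E_l_char:
  "\<zeta> \<in> E_str X U Y \<delta> X0 0 (int l) x \<longleftrightarrow>
   (\<exists>\<mu> \<nu> \<xi> k. (\<mu>,\<nu>,\<xi>) \<in> full_behavior X U Y \<delta> X0 \<and> \<xi> k = x \<and> \<zeta> = outs \<nu> k (Suc l))"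
  using E_str0[of \<zeta> X U Y \<delta> X0 "int l" x] by (simp add: nat_add_distrib)

lemma Pi_char:
  assumes "\<zeta> \<in> Pi_l (Suc l) (behavior X U Y \<delta> X0)" "\<zeta> ! 0 \<noteq> None"
  shows "\<exists>\<mu> \<nu> \<xi> j. (\<mu>,\<nu>,\<xi>) \<in> full_behavior X U Y \<delta> X0 \<and> \<zeta> = outs \<nu> j (Suc l)"
proof -
  obtain k w where w: "w \<in> behavior X U Y \<delta> X0" and z: "\<zeta> = sig_restr w (int k - int (Suc l) + 1) (int k)"
    using assms(1) unfolding Pi_l_def by blast
  obtain \<mu> \<nu> \<xi> where fb: "(\<mu>,\<nu>,\<xi>) \<in> full_behavior X U Y \<delta> X0"
    and h: "\<forall>k::int. w k = (if k < 0 then None else Some (\<nu> (nat k)))"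
    using w unfolding behavior_def by blast
  have "\<zeta> ! 0 = w (int k - int l)" using z by (simp add: sig_restr_def)
  hence kl: "k \<ge> l" using assms(2) h by (cases "k \<ge> l") auto
  define j where "j = k - l"
  have "\<zeta> = sig_restr w (int j) (int j + int l)" using z kl by (simp add: j_def of_nat_diff)
  hence "\<zeta> = outs \<nu> j (Suc l)" using sig_outs[of w \<nu> j "int l"] h by (simp add: nat_add_distrib)
  thus ?thesis using fb by blast
qed

lemma Pi_intro:
  assumes "(\<mu>,\<nu>,\<xi>) \<in> full_behavior X U Y \<delta> X0"
  shows "outs \<nu> j (Suc l) \<in> Pi_l (Suc l) (behavior X U Y \<delta> X0)"
proof -
  define w where "w = (\<lambda>k::int. if k < 0 then None else Some (\<nu> (nat k)))"
  have "w \<in> behavior X U Y \<delta> X0" unfolding behavior_def w_def using assms by blast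
  moreover have "outs \<nu> j (Suc l) = sig_restr w (int (j + l) - int (Suc l) + 1) (int (j+l))"
    using sig_outs[of w \<nu> j "int l"] by (simp add: w_def nat_add_distrib)
  ultimately show ?thesis unfolding Pi_l_def by blast
qed

lemma splice:
  assumes sm: "state_machine X U Y \<delta> X0"
    and A: "(\<mu>A,\<nu>A,\<xi>A) \<in> full_behavior X U Y \<delta> X0" "\<xi>A k1 = x"
    and d: "(x,u,y,x') \<in> \<delta>"
    and B: "(\<mu>B,\<nu>B,\<xi>B) \<in> full_behavior X U Y \<delta> X0" "\<xi>B k2 = x'"
  shows "\<exists>\<mu> \<nu> \<xi>. (\<mu>,\<nu>,\<xi>) \<in> full_behavior X U Y \<delta> X0 \<and> \<xi> k1 = x \<and> \<mu> k1 = u \<and> \<nu> k1 = y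
     \<and> \<xi> (Suc k1) = x' \<and> (\<forall>n. outs \<nu> k1 (Suc n) = Some y # outs \<nu>B k2 n)"
proof -
  define \<mu> where "\<mu> = (\<lambda>n. if n < k1 then \<mu>A n else if n = k1 then u else \<mu>B (k2 + n - Suc k1))"
  define \<nu> where "\<nu> = (\<lambda>n. if n < k1 then \<nu>A n else if n = k1 then y else \<nu>B (k2 + n - Suc k1))"
  define \<xi> where "\<xi> = (\<lambda>n. if n \<le> k1 then \<xi>A n else \<xi>B (k2 + n - Suc k1))"
  have uy: "u \<in> U" "y \<in> Y" using d sm unfolding state_machine_def by auto
  have fA: "\<forall>k. \<mu>A k \<in> U \<and> \<nu>A k \<in> Y \<and> \<xi>A k \<in> X" "\<xi>A 0 \<in> X0" "\<forall>k. (\<xi>A k, \<mu>A k, \<nu>A k, \<xi>A (Suc k)) \<in> \<delta>"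
    using A(1) unfolding full_behavior_def by auto
  have fB: "\<forall>k. \<mu>B k \<in> U \<and> \<nu>B k \<in> Y \<and> \<xi>B k \<in> X" "\<forall>k. (\<xi>B k, \<mu>B k, \<nu>B k, \<xi>B (Suc k)) \<in> \<delta>"
    using B(1) unfolding full_behavior_def by auto
  have tr: "(\<xi> k, \<mu> k, \<nu> k, \<xi> (Suc k)) \<in> \<delta>" for k
  proof (cases "k < k1")
    case True thus ?thesis using fA(3) by (simp add: \<mu>_def \<nu>_def \<xi>_def)
  next
    case False
    show ?thesis
    proof (cases "k = k1")
      case True thus ?thesis using d A(2) B(2) by (simp add: \<mu>_def \<nu>_def \<xi>_def)
    next
      case False
      with \<open>\<not> k < k1\<close> have "k > k1" by simp
      moreover have "k2 + Suc k - Suc k1 = Suc (k2 + k - Suc k1)" using \<open>k > k1\<close> by simp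
      ultimately show ?thesis using fB(2)[rule_format, of "k2 + k - Suc k1"] by (simp add: \<mu>_def \<nu>_def \<xi>_def)
    qed
  qed
  have "(\<mu>,\<nu>,\<xi>) \<in> full_behavior X U Y \<delta> X0"
    unfolding full_behavior_def using tr fA fB uy by (auto simp: \<mu>_def \<nu>_def \<xi>_def)
  moreover have "outs \<nu> k1 (Suc n) = Some y # outs \<nu>B k2 n" for n
    unfolding outs_Suc by (rule nth_equalityI) (auto simp: \<nu>_def nth_Cons split: nat.splits)
  moreover have "\<xi> k1 = x \<and> \<mu> k1 = u \<and> \<nu> k1 = y \<and> \<xi> (Suc k1) = x'"
    using A(2) B(2) by (simp add: \<mu>_def \<nu>_def \<xi>_def)
  ultimately show ?thesis by blast
qed


lemma outs_shift: "l \<ge> 1 \<Longrightarrow> outs \<nu> j l = Some (\<nu> j) # take (l-1) (outs \<nu> (Suc j) l)"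
proof (cases l)
  case (Suc m) then show ?thesis by (simp add: outs_Suc[of \<nu> j m] take_outs)
qed simp

lemma abs_delta_ll:
  assumes "l \<ge> 1"
  shows "(\<zeta>,u,y,\<zeta>') \<in> abs_delta X U Y \<delta> X0 l l \<longleftrightarrow>
    take l \<zeta> = Some y # take (l-1) \<zeta>' \<and>
    (\<exists>x x'. \<zeta> \<in> E_I X U Y \<delta> X0 l l x \<and> \<zeta>' \<in> E_I X U Y \<delta> X0 l l x' \<and> (x,u,y,x') \<in> \<delta>)"
proof -
  have a: "nat (int l - 1 + 1) = l" "nat (int l - 2 + 1) = l - 1" using assms by auto
  have "take l (Some y # take (l-1) \<zeta>') = Some y # take (l-1) \<zeta>'"
    using assms by (cases l) auto
  thus ?thesis unfolding abs_delta_def str_restr_def using a by simp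
qed

lemma sim_relI:
  assumes "\<forall>x1\<in>X01. \<exists>x2\<in>X02. (x1,x2)\<in>R"
    and "\<And>x1 x2 u1 y1 x1'. (x1,x2)\<in>R \<Longrightarrow> (x1,u1,y1,x1')\<in>\<delta>1 \<Longrightarrow>
          \<exists>u2 y2 x2'. (x2, u2, y2, x2') \<in> \<delta>2 \<and> (x1', x2') \<in> R \<and> piV (u1, y1) = piV (u2, y2)"
  shows "sim_rel R X01 \<delta>1 X02 \<delta>2 piV"
  using assms unfolding sim_rel_def by blast

lemma sim_relD:
  assumes "sim_rel R X01 \<delta>1 X02 \<delta>2 piV" "(x1,x2)\<in>R" "(x1,u1,y1,x1')\<in>\<delta>1"
  shows "\<exists>u2 y2 x2'. (x2, u2, y2, x2') \<in> \<delta>2 \<and> (x1', x2') \<in> R \<and> piV (u1, y1) = piV (u2, y2)"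
  using assms unfolding sim_rel_def by blast

lemma fb_props:
  assumes "(\<mu>,\<nu>,\<xi>) \<in> full_behavior X U Y \<delta> X0"
  shows "\<xi> k \<in> X" "(\<xi> k, \<mu> k, \<nu> k, \<xi> (Suc k)) \<in> \<delta>" "\<xi> 0 \<in> X0"
  using assms unfolding full_behavior_def by auto

theorem theorem9:
  fixes X :: "'x set" and U :: "'u set" and Y :: "'y set"
    and \<delta> :: "('x \<times> 'u \<times> 'y \<times> 'x) set" and X0 :: "'x set" and l :: nat
  assumes "standing_assumptions_Y X U Y \<delta> X0"
    and "l \<ge> 1"
  defines "R \<equiv> {(\<zeta>, yh). \<zeta> \<in> absX X U Y \<delta> X0 l l \<and> yh \<in> quotX X U Y \<delta> X0 l \<and> \<zeta> \<in> yh}"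
  shows "(sim_rel R (absX0 X U Y \<delta> X0 l l) (abs_delta X U Y \<delta> X0 l l)
                    (quotX0 X U Y \<delta> X0 l) (quot_delta X U Y \<delta> X0 l) pi_Y
            \<longleftrightarrow> domino_consistent X U Y \<delta> X0 l)
       \<and> (sim_rel (converse R) (quotX0 X U Y \<delta> X0 l) (quot_delta X U Y \<delta> X0 l)
                    (absX0 X U Y \<delta> X0 l l) (abs_delta X U Y \<delta> X0 l l) pi_Y
            \<longleftrightarrow> future_unique X U Y \<delta> X0 l l)"
proof -
  have sm: "state_machine X U Y \<delta> X0" and lr: "live_reachable X U Y \<delta> X0"
    using assms(1) unfolding standing_assumptions_Y_def by auto
  have l1: "l \<ge> 1" by fact
  let ?FB = "full_behavior X U Y \<delta> X0"
  let ?E = "E_I X U Y \<delta> X0 l l"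
  have X0X: "X0 \<subseteq> X" using sm unfolding state_machine_def by auto
  have reach: "\<exists>\<mu> \<nu> \<xi> k. (\<mu>,\<nu>,\<xi>) \<in> ?FB \<and> \<xi> k = x" if "x \<in> X" for x
    using lr that unfolding live_reachable_def by fast
  have reach0: "\<exists>\<mu> \<nu> \<xi>. (\<mu>,\<nu>,\<xi>) \<in> ?FB \<and> \<xi> 0 = x" if "x \<in> X0" for x
    using lr that unfolding live_reachable_def by fast
  have Rmem: "(\<zeta>, yh) \<in> R \<longleftrightarrow> (\<exists>x\<in>X. yh = ?E x) \<and> \<zeta> \<in> yh" for \<zeta> yh
    unfolding R_def absX_def quotX_def by blast
  have lenE: "length \<zeta> = l" if "\<zeta> \<in> ?E x" for \<zeta> x
    using that E_I_char[of \<zeta> X U Y \<delta> X0 l x] by auto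
  have init1: "\<forall>x1\<in>absX0 X U Y \<delta> X0 l l. \<exists>x2\<in>quotX0 X U Y \<delta> X0 l. (x1,x2)\<in>R"
    unfolding absX0_def quotX0_def Rmem using X0X by blast
  have init2: "\<forall>x1\<in>quotX0 X U Y \<delta> X0 l. \<exists>x2\<in>absX0 X U Y \<delta> X0 l l. (x1,x2)\<in>converse R"
  proof
    fix yh assume "yh \<in> quotX0 X U Y \<delta> X0 l"
    then obtain x where x: "x \<in> X0" "yh = ?E x" unfolding quotX0_def by blast
    obtain \<mu> \<nu> \<xi> where "(\<mu>,\<nu>,\<xi>) \<in> ?FB" "\<xi> 0 = x" using reach0[OF x(1)] by blast
    hence "outs \<nu> 0 l \<in> ?E x" using E_I_char by fast
    thus "\<exists>x2\<in>absX0 X U Y \<delta> X0 l l. (yh,x2)\<in>converse R"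
      unfolding absX0_def using x X0X Rmem by blast
  qed
  have i1: "domino_consistent X U Y \<delta> X0 l"
    if sim: "sim_rel R (absX0 X U Y \<delta> X0 l l) (abs_delta X U Y \<delta> X0 l l)
                    (quotX0 X U Y \<delta> X0 l) (quot_delta X U Y \<delta> X0 l) pi_Y"
    unfolding domino_consistent_def
  proof (intro ballI impI)
    fix \<eta> yh assume \<eta>: "\<eta> \<in> Pi_l (Suc l) (behavior X U Y \<delta> X0)"
      and yh: "yh \<in> quotX X U Y \<delta> X0 l" and inyh: "str_restr \<eta> 0 (int l - 1) \<in> yh"
    obtain x0 where x0: "x0 \<in> X" "yh = ?E x0" using yh unfolding quotX_def by blast
    have sr: "str_restr \<eta> 0 (int l - 1) = take l \<eta>" by (simp add: str_restr_def)
    obtain \<mu>0 \<nu>0 \<xi>0 k0 where "take l \<eta> = outs \<nu>0 k0 l"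
      using inyh x0 sr E_I_char by metis
    hence "take l \<eta> ! 0 \<noteq> None" using l1 by simp
    hence "\<eta> ! 0 \<noteq> None" using l1 by simp
    then obtain \<mu> \<nu> \<xi> j where fb: "(\<mu>,\<nu>,\<xi>) \<in> ?FB" and \<eta>eq: "\<eta> = outs \<nu> j (Suc l)"
      using Pi_char[OF \<eta>] by blast
    define \<zeta> where "\<zeta> = outs \<nu> j l"
    define \<zeta>' where "\<zeta>' = outs \<nu> (Suc j) l"
    have t\<eta>: "take l \<eta> = \<zeta>" unfolding \<eta>eq \<zeta>_def take_outs by simp
    have zE: "\<zeta> \<in> ?E (\<xi> j)" unfolding \<zeta>_def using fb E_I_char by fast
    have zE': "\<zeta>' \<in> ?E (\<xi> (Suc j))" unfolding \<zeta>'_def using fb E_I_char by fast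
    have d: "(\<xi> j, \<mu> j, \<nu> j, \<xi> (Suc j)) \<in> \<delta>" using fb_props[OF fb] by blast
    have "take l \<zeta> = Some (\<nu> j) # take (l-1) \<zeta>'"
      using l1 outs_shift[OF l1, of \<nu> j] unfolding \<zeta>_def \<zeta>'_def by (simp add: take_outs)
    hence ad: "(\<zeta>, \<mu> j, \<nu> j, \<zeta>') \<in> abs_delta X U Y \<delta> X0 l l"
      unfolding abs_delta_ll[OF l1] using zE zE' d by blast
    have "(\<zeta>, yh) \<in> R" using Rmem x0 inyh sr t\<eta> by auto
    from sim_relD[OF sim this ad] obtain u2 y2 yh' where
      qd: "(yh, u2, y2, yh') \<in> quot_delta X U Y \<delta> X0 l" and r': "(\<zeta>', yh') \<in> R"
      and py: "pi_Y (\<mu> j, \<nu> j) = pi_Y (u2, y2)" by blast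
    have y2: "y2 = \<nu> j" using py by (simp add: pi_Y_def)
    obtain x1 x1' where x1: "x1 \<in> X" "x1' \<in> X" "yh = ?E x1" "yh' = ?E x1'" "(x1,u2,y2,x1') \<in> \<delta>"
      using qd unfolding quot_delta_def by blast
    have "\<zeta>' \<in> ?E x1'" using r' x1 Rmem by auto
    then obtain \<mu>B \<nu>B \<xi>B k2 where B: "(\<mu>B,\<nu>B,\<xi>B) \<in> ?FB" "\<xi>B k2 = x1'" "\<zeta>' = outs \<nu>B k2 l"
      using E_I_char by metis
    obtain \<mu>A \<nu>A \<xi>A k1 where A: "(\<mu>A,\<nu>A,\<xi>A) \<in> ?FB" "\<xi>A k1 = x1" using reach[OF x1(1)] by blast
    obtain \<mu>C \<nu>C \<xi>C where C: "(\<mu>C,\<nu>C,\<xi>C) \<in> ?FB" "\<xi>C k1 = x1"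
       "outs \<nu>C k1 (Suc l) = Some y2 # outs \<nu>B k2 l"
      using splice[OF sm A x1(5) B(1,2)] by blast
    have "\<eta> = outs \<nu>C k1 (Suc l)" using C(3) B(3) y2 \<eta>eq \<zeta>'_def by (simp add: outs_Suc)
    hence "\<eta> \<in> E_str X U Y \<delta> X0 0 (int l) x1" using E_l_char C(1,2) by fast
    thus "\<exists>x\<in>X. ?E x = yh \<and> \<eta> \<in> E_str X U Y \<delta> X0 0 (int l) x" using x1 by blast
  qed
  have i2: "sim_rel R (absX0 X U Y \<delta> X0 l l) (abs_delta X U Y \<delta> X0 l l)
                    (quotX0 X U Y \<delta> X0 l) (quot_delta X U Y \<delta> X0 l) pi_Y"
    if dc: "domino_consistent X U Y \<delta> X0 l"
  proof (rule sim_relI[OF init1])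
    fix \<zeta> yh u y \<zeta>' assume r: "(\<zeta>, yh) \<in> R" and ad: "(\<zeta>, u, y, \<zeta>') \<in> abs_delta X U Y \<delta> X0 l l"
    obtain x0 where x0: "x0 \<in> X" "yh = ?E x0" "\<zeta> \<in> yh" using r Rmem by auto
    obtain x1 x1' where tk: "take l \<zeta> = Some y # take (l-1) \<zeta>'"
      and x1: "\<zeta> \<in> ?E x1" "\<zeta>' \<in> ?E x1'" "(x1,u,y,x1') \<in> \<delta>"
      using ad by (simp add: abs_delta_ll[OF l1]) blast
    obtain \<mu>A \<nu>A \<xi>A k1 where A: "(\<mu>A,\<nu>A,\<xi>A) \<in> ?FB" "\<xi>A k1 = x1" using x1(1) E_I_char by metis
    obtain \<mu>B \<nu>B \<xi>B k2 where B: "(\<mu>B,\<nu>B,\<xi>B) \<in> ?FB" "\<xi>B k2 = x1'" "\<zeta>' = outs \<nu>B k2 l"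
      using x1(2) E_I_char by metis
    obtain \<mu>C \<nu>C \<xi>C where C: "(\<mu>C,\<nu>C,\<xi>C) \<in> ?FB"
       "outs \<nu>C k1 (Suc l) = Some y # outs \<nu>B k2 l"
      using splice[OF sm A x1(3) B(1,2)] by blast
    define \<eta> where "\<eta> = Some y # \<zeta>'"
    have \<eta>P: "\<eta> \<in> Pi_l (Suc l) (behavior X U Y \<delta> X0)"
      using Pi_intro[OF C(1), of k1 l] C(2) B(3) \<eta>_def by simp
    have "str_restr \<eta> 0 (int l - 1) = take l \<eta>" by (simp add: str_restr_def)
    also have "\<dots> = Some y # take (l-1) \<zeta>'" unfolding \<eta>_def using l1 by (simp add: take_Cons')
    also have "\<dots> = \<zeta>" using tk lenE[OF x1(1)] by simp
    finally have "str_restr \<eta> 0 (int l - 1) \<in> yh" using x0 by simp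
    moreover have "yh \<in> quotX X U Y \<delta> X0 l" using x0 unfolding quotX_def by blast
    ultimately obtain x where x: "x \<in> X" "?E x = yh" "\<eta> \<in> E_str X U Y \<delta> X0 0 (int l) x"
      using dc \<eta>P unfolding domino_consistent_def by blast
    then obtain \<mu>D \<nu>D \<xi>D k where D: "(\<mu>D,\<nu>D,\<xi>D) \<in> ?FB" "\<xi>D k = x" "\<eta> = outs \<nu>D k (Suc l)"
      using E_l_char by metis
    have yD: "\<nu>D k = y" and zD: "\<zeta>' = outs \<nu>D (Suc k) l" using D(3) \<eta>_def by (auto simp: outs_Suc)
    have dD: "(x, \<mu>D k, y, \<xi>D (Suc k)) \<in> \<delta>" using fb_props(2)[OF D(1), of k] D(2) yD by simp
    have xs: "\<xi>D (Suc k) \<in> X" using fb_props(1)[OF D(1)] by blast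
    have "\<zeta>' \<in> ?E (\<xi>D (Suc k))" using zD D(1) E_I_char by fast
    hence "(\<zeta>', ?E (\<xi>D (Suc k))) \<in> R" using Rmem xs by blast
    moreover have "(yh, \<mu>D k, y, ?E (\<xi>D (Suc k))) \<in> quot_delta X U Y \<delta> X0 l"
      unfolding quot_delta_def using x dD xs by blast
    ultimately show "\<exists>u2 y2 x2'. (yh, u2, y2, x2') \<in> quot_delta X U Y \<delta> X0 l \<and> (\<zeta>', x2') \<in> R \<and>
                     pi_Y (u, y) = pi_Y (u2, y2)" by (auto simp: pi_Y_def)
  qed
  have ii1: "future_unique X U Y \<delta> X0 l l"
    if sim: "sim_rel (converse R) (quotX0 X U Y \<delta> X0 l) (quot_delta X U Y \<delta> X0 l)
                    (absX0 X U Y \<delta> X0 l l) (abs_delta X U Y \<delta> X0 l l) pi_Y"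
  proof -
    have claim: "\<forall>x \<zeta> \<mu> \<nu> \<xi> k. x \<in> X \<longrightarrow> \<zeta> \<in> ?E x \<longrightarrow> (\<mu>,\<nu>,\<xi>) \<in> ?FB \<longrightarrow> \<xi> k = x \<longrightarrow> n < l
       \<longrightarrow> \<zeta> ! n = Some (\<nu> (k + n))" for n
    proof (induction n)
      case 0
      show ?case
      proof (intro allI impI)
        fix x \<zeta> \<mu> \<nu> \<xi> k assume h: "x \<in> X" "\<zeta> \<in> ?E x" "(\<mu>,\<nu>,\<xi>) \<in> ?FB" "\<xi> k = x" "0 < l"
        have xs: "\<xi> (Suc k) \<in> X" using fb_props(1)[OF h(3)] by blast
        have qd: "(?E x, \<mu> k, \<nu> k, ?E (\<xi> (Suc k))) \<in> quot_delta X U Y \<delta> X0 l"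
          unfolding quot_delta_def using h fb_props(2)[OF h(3), of k] xs by blast
        have "(?E x, \<zeta>) \<in> converse R" using Rmem h by blast
        from sim_relD[OF sim this qd] obtain u2 y2 \<zeta>' where
          "(\<zeta>, u2, y2, \<zeta>') \<in> abs_delta X U Y \<delta> X0 l l" "pi_Y (\<mu> k, \<nu> k) = pi_Y (u2, y2)" by blast
        hence "take l \<zeta> = Some (\<nu> k) # take (l-1) \<zeta>'"
          by (auto simp: abs_delta_ll[OF l1] pi_Y_def)
        hence "take l \<zeta> ! 0 = Some (\<nu> k)" by simp
        thus "\<zeta> ! 0 = Some (\<nu> (k + 0))" using h(5) by simp
      qed
    next
      case (Suc n)
      show ?case
      proof (intro allI impI)
        fix x \<zeta> \<mu> \<nu> \<xi> k assume h: "x \<in> X" "\<zeta> \<in> ?E x" "(\<mu>,\<nu>,\<xi>) \<in> ?FB" "\<xi> k = x" "Suc n < l"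
        have xs: "\<xi> (Suc k) \<in> X" using fb_props(1)[OF h(3)] by blast
        have qd: "(?E x, \<mu> k, \<nu> k, ?E (\<xi> (Suc k))) \<in> quot_delta X U Y \<delta> X0 l"
          unfolding quot_delta_def using h fb_props(2)[OF h(3), of k] xs by blast
        have "(?E x, \<zeta>) \<in> converse R" using Rmem h by blast
        from sim_relD[OF sim this qd] obtain u2 y2 \<zeta>' where
          ad: "(\<zeta>, u2, y2, \<zeta>') \<in> abs_delta X U Y \<delta> X0 l l" and r': "(?E (\<xi> (Suc k)), \<zeta>') \<in> converse R"
          by blast
        hence "take l \<zeta> = Some y2 # take (l-1) \<zeta>'"
          by (simp add: abs_delta_ll[OF l1])
        hence "take l \<zeta> ! Suc n = take (l-1) \<zeta>' ! n" by simp
        hence e: "\<zeta> ! Suc n = \<zeta>' ! n" using h(5) by simp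
        have "\<zeta>' \<in> ?E (\<xi> (Suc k))" using r' by (simp add: R_def)
        hence "\<zeta>' ! n = Some (\<nu> (Suc k + n))" using Suc.IH xs h(3) h(5) by simp
        thus "\<zeta> ! Suc n = Some (\<nu> (k + Suc n))" using e by simp
      qed
    qed
    show ?thesis unfolding future_unique_def
    proof (intro ballI)
      fix x \<zeta>1 \<zeta>2 assume x: "x \<in> X" and z1: "\<zeta>1 \<in> ?E x" and z2: "\<zeta>2 \<in> ?E x"
      obtain \<mu> \<nu> \<xi> k where B: "(\<mu>,\<nu>,\<xi>) \<in> ?FB" "\<xi> k = x" "\<zeta>2 = outs \<nu> k l"
        using z2 E_I_char by metis
      have "\<zeta>1 = \<zeta>2"
      proof (rule nth_equalityI)
        show "length \<zeta>1 = length \<zeta>2" using lenE z1 z2 by metis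
        fix i assume "i < length \<zeta>1"
        hence "i < l" using lenE z1 by metis
        thus "\<zeta>1 ! i = \<zeta>2 ! i" using claim[of i] x z1 B by simp
      qed
      thus "str_restr \<zeta>1 (int l - int l) (int l - 1) = str_restr \<zeta>2 (int l - int l) (int l - 1)" by simp
    qed
  qed
  have ii2: "sim_rel (converse R) (quotX0 X U Y \<delta> X0 l) (quot_delta X U Y \<delta> X0 l)
                    (absX0 X U Y \<delta> X0 l l) (abs_delta X U Y \<delta> X0 l l) pi_Y"
    if fu: "future_unique X U Y \<delta> X0 l l"
  proof (rule sim_relI[OF init2])
    fix yh \<zeta> u y yh' assume r: "(yh, \<zeta>) \<in> converse R" and qd: "(yh, u, y, yh') \<in> quot_delta X U Y \<delta> X0 l"
    obtain x x' where xx: "x \<in> X" "x' \<in> X" "yh = ?E x" "yh' = ?E x'" "(x,u,y,x') \<in> \<delta>"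
      using qd unfolding quot_delta_def by blast
    have zx: "\<zeta> \<in> ?E x" using r xx by (simp add: R_def)
    obtain \<mu>A \<nu>A \<xi>A k1 where A: "(\<mu>A,\<nu>A,\<xi>A) \<in> ?FB" "\<xi>A k1 = x" using reach[OF xx(1)] by blast
    obtain \<mu>B \<nu>B \<xi>B k2 where B: "(\<mu>B,\<nu>B,\<xi>B) \<in> ?FB" "\<xi>B k2 = x'" using reach[OF xx(2)] by blast
    define \<zeta>' where "\<zeta>' = outs \<nu>B k2 l"
    have z'E: "\<zeta>' \<in> ?E x'" unfolding \<zeta>'_def using B E_I_char by fast
    obtain \<mu>C \<nu>C \<xi>C where C: "(\<mu>C,\<nu>C,\<xi>C) \<in> ?FB" "\<xi>C k1 = x"
       "outs \<nu>C k1 (Suc l) = Some y # outs \<nu>B k2 l"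
      using splice[OF sm A xx(5) B] by blast
    have oE: "outs \<nu>C k1 l \<in> ?E x" using C(1,2) E_I_char by fast
    have "outs \<nu>C k1 l = take l (outs \<nu>C k1 (Suc l))" by (simp add: take_outs)
    also have "\<dots> = Some y # take (l-1) \<zeta>'" unfolding C(3) \<zeta>'_def using l1 by (simp add: take_Cons')
    finally have oeq: "outs \<nu>C k1 l = Some y # take (l-1) \<zeta>'" .
    have "\<zeta> = outs \<nu>C k1 l"
      using fu xx(1) zx oE lenE[OF zx] unfolding future_unique_def str_restr_def by fastforce
    hence "take l \<zeta> = Some y # take (l-1) \<zeta>'" using oeq lenE[OF zx] by simp
    hence ad: "(\<zeta>, u, y, \<zeta>') \<in> abs_delta X U Y \<delta> X0 l l"
      unfolding abs_delta_ll[OF l1] using zx z'E xx(5) by blast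
    have "(yh', \<zeta>') \<in> converse R" using Rmem xx z'E by blast
    thus "\<exists>u2 y2 x2'. (\<zeta>, u2, y2, x2') \<in> abs_delta X U Y \<delta> X0 l l \<and> (yh', x2') \<in> converse R \<and>
                     pi_Y (u, y) = pi_Y (u2, y2)" using ad by blast
  qed
  show ?thesis using i1 i2 ii1 ii2 by blast
qed

end
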